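(* Let $n\ge1$, $X=\{1,\dots,n\}$, $\mathcal{A}$ the algebra of all functions $X\to\mathbb{R}$ with pointwise operations, $\sigma:X\to X$ a bijection and $\tilde{\sigma}(f)=f\circ\sigma^{-1}$. The center of the skew power series ring $\mathcal{A}[[x;\tilde{\sigma}]]$ is $$Z(\mathcal{A}[[x;\tilde{\sigma}]])=\Big\{\sum_{n=0}^{\infty} f_nx^n : f_n\in\mathcal{A},\ f_n=0\text{ on } Sep^n(X)\text{ and }\tilde{\sigma}(f_n)=f_n\text{ for all } n\ge0\Big\}.$$
   Context: The skew power series ring $\mathcal{A}[[x;\tilde{\sigma}]]$ is the set of formal series $\sum_{n=0}^\infty f_nx^n$, $f_n\in\mathcal{A}$, with coefficientwise addition and multiplication $\big(\sum_n f_nx^n\big)\big(\sum_n g_nx^n\big)=\sum_{n}\big(\sum_{k=0}^n f_k\,\tilde{\sigma}^k(g_{n-k})\big)x^n$ (so $xf=\tilde{\sigma}(f)x$). For an integer $n$, $Sep^n(X)=\{p\in X:\sigma^n(p)\neq p\}$ (so $Sep^0(X)=\emptyset$). *)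

theory Defs
  imports Complex_Main
begin

definition Xset :: "nat \<Rightarrow> nat set" where
  "Xset n = {1..n}"

text \<open>The algebra of all real functions on X, represented as functions on nat
  that vanish outside X (extensional convention).\<close>
definition Alg :: "nat \<Rightarrow> (nat \<Rightarrow> real) set" where
  "Alg n = {f. \<forall>p. p \<notin> Xset n \<longrightarrow> f p = 0}"

definition sig_tilde :: "nat \<Rightarrow> (nat \<Rightarrow> nat) \<Rightarrow> (nat \<Rightarrow> real) \<Rightarrow> (nat \<Rightarrow> real)" where
  "sig_tilde n \<sigma> f = (\<lambda>p. if p \<in> Xset n then f (inv_into (Xset n) \<sigma> p) else 0)"

definition SkewPS :: "nat \<Rightarrow> (nat \<Rightarrow> nat \<Rightarrow> real) set" where
  "SkewPS n = {F. \<forall>k. F k \<in> Alg n}"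

definition skew_mult ::
  "nat \<Rightarrow> (nat \<Rightarrow> nat) \<Rightarrow> (nat \<Rightarrow> nat \<Rightarrow> real) \<Rightarrow> (nat \<Rightarrow> nat \<Rightarrow> real) \<Rightarrow> (nat \<Rightarrow> nat \<Rightarrow> real)" where
  "skew_mult n \<sigma> F G = (\<lambda>m p. \<Sum>k\<le>m. F k p * ((sig_tilde n \<sigma> ^^ k) (G (m - k))) p)"

definition skew_center :: "nat \<Rightarrow> (nat \<Rightarrow> nat) \<Rightarrow> (nat \<Rightarrow> nat \<Rightarrow> real) set" where
  "skew_center n \<sigma> = {F \<in> SkewPS n. \<forall>G \<in> SkewPS n. skew_mult n \<sigma> F G = skew_mult n \<sigma> G F}"

definition Sep :: "nat \<Rightarrow> (nat \<Rightarrow> nat) \<Rightarrow> nat \<Rightarrow> nat set" where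
  "Sep n \<sigma> k = {p \<in> Xset n. (\<sigma> ^^ k) p \<noteq> p}"

end

theory Submission
  imports Defs
begin

lemma sum_rev_atMost: "(\<Sum>i\<le>(m::nat). g (m - i)) = (\<Sum>i\<le>m. (g i :: real))"
proof -
  have "(\<Sum>i<Suc m. g (Suc m - Suc i)) = (\<Sum>i<Suc m. g i)"
    by (rule sum.nat_diff_reindex)
  then show ?thesis by (simp add: lessThan_Suc_atMost)
qed

lemma pow_T:
  assumes "p \<in> Xset n" "bij_betw \<sigma> (Xset n) (Xset n)"
  shows "(sig_tilde n \<sigma> ^^ k) f p = f ((inv_into (Xset n) \<sigma> ^^ k) p)"
  using assms(1)
proof (induction k arbitrary: p f)
  case 0 then show ?case by simp
next
  case (Suc k)
  have b: "bij_betw (inv_into (Xset n) \<sigma>) (Xset n) (Xset n)"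
    using assms(2) by (rule bij_betw_inv_into)
  have X: "\<And>j q. q \<in> Xset n \<Longrightarrow> (inv_into (Xset n) \<sigma> ^^ j) q \<in> Xset n"
  proof -
    fix j q assume "q \<in> Xset n" then show "(inv_into (Xset n) \<sigma> ^^ j) q \<in> Xset n"
      using b by (induction j) (auto simp: bij_betw_def)
  qed
  have "(sig_tilde n \<sigma> ^^ Suc k) f p = (sig_tilde n \<sigma> ^^ k) (sig_tilde n \<sigma> f) p"
    by (simp add: funpow_Suc_right del: funpow.simps)
  also have "\<dots> = sig_tilde n \<sigma> f ((inv_into (Xset n) \<sigma> ^^ k) p)" using Suc by blast
  also have "\<dots> = f ((inv_into (Xset n) \<sigma> ^^ Suc k) p)"
    using X[OF Suc.prems, of k] by (simp add: sig_tilde_def)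
  finally show ?case .
qed

lemma inv_pow_stays:
  assumes "p \<in> Xset n" "bij_betw \<sigma> (Xset n) (Xset n)"
  shows "(inv_into (Xset n) \<sigma> ^^ j) p \<in> Xset n"
proof -
  have b: "bij_betw (inv_into (Xset n) \<sigma>) (Xset n) (Xset n)"
    using assms(2) by (rule bij_betw_inv_into)
  show ?thesis using assms(1) b by (induction j) (auto simp: bij_betw_def)
qed

lemma sigma_inv_pow:
  assumes "p \<in> Xset n" "bij_betw \<sigma> (Xset n) (Xset n)"
  shows "(\<sigma> ^^ j) ((inv_into (Xset n) \<sigma> ^^ j) p) = p"
  using assms(1)
proof (induction j arbitrary: p)
  case 0 then show ?case by simp
next
  case (Suc j)
  have q: "inv_into (Xset n) \<sigma> p \<in> Xset n"
    using inv_pow_stays[OF Suc.prems assms(2), of 1] by simp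
  have "(\<sigma> ^^ Suc j) ((inv_into (Xset n) \<sigma> ^^ Suc j) p)
     = \<sigma> ((\<sigma> ^^ j) ((inv_into (Xset n) \<sigma> ^^ j) (inv_into (Xset n) \<sigma> p)))"
    by (simp add: funpow_swap1)
  also have "\<dots> = \<sigma> (inv_into (Xset n) \<sigma> p)" using Suc.IH[OF q] by simp
  also have "\<dots> = p" using assms(2) Suc.prems
    by (metis bij_betw_def f_inv_into_f)
  finally show ?case .
qed

lemma fix_T:
  assumes "p \<in> Xset n" "bij_betw \<sigma> (Xset n) (Xset n)" "sig_tilde n \<sigma> f = f"
  shows "f ((inv_into (Xset n) \<sigma> ^^ j) p) = f p"
proof -
  have "(sig_tilde n \<sigma> ^^ j) f = f" using assms(3) by (induction j) auto
  then show ?thesis using pow_T[OF assms(1,2), of j f] by simp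
qed

theorem theorem11:
  fixes n :: nat and \<sigma> :: "nat \<Rightarrow> nat"
  assumes "n \<ge> 1"
    and "bij_betw \<sigma> (Xset n) (Xset n)"
  shows "skew_center n \<sigma> =
    {F \<in> SkewPS n. \<forall>k. (\<forall>p \<in> Sep n \<sigma> k. F k p = 0) \<and> sig_tilde n \<sigma> (F k) = F k}"
proof (intro equalityI subsetI)
  let ?T = "sig_tilde n \<sigma>"
  let ?s = "inv_into (Xset n) \<sigma>"
  fix F assume Fc: "F \<in> skew_center n \<sigma>"
  then have FS: "F \<in> SkewPS n" and comm: "\<And>G. G \<in> SkewPS n \<Longrightarrow> skew_mult n \<sigma> F G = skew_mult n \<sigma> G F"
    by (auto simp: skew_center_def)
  have Fout: "\<And>k p. p \<notin> Xset n \<Longrightarrow> F k p = 0" using FS by (auto simp: SkewPS_def Alg_def)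
  have "\<forall>k. (\<forall>p \<in> Sep n \<sigma> k. F k p = 0) \<and> ?T (F k) = F k"
  proof (intro allI conjI ballI)
    fix k p assume pS: "p \<in> Sep n \<sigma> k"
    then have pX: "p \<in> Xset n" and ne: "(\<sigma> ^^ k) p \<noteq> p" by (auto simp: Sep_def)
    define r where "r = (?s ^^ k) p"
    have rX: "r \<in> Xset n" unfolding r_def by (rule inv_pow_stays[OF pX assms(2)])
    have rp: "r \<noteq> p" using sigma_inv_pow[OF pX assms(2), of k] ne unfolding r_def by metis
    define G :: "nat \<Rightarrow> nat \<Rightarrow> real" where "G = (\<lambda>j q. if j = 0 \<and> q = r then 1 else 0)"
    have GS: "G \<in> SkewPS n" using rX by (auto simp: G_def SkewPS_def Alg_def)
    have "skew_mult n \<sigma> F G k p = (\<Sum>i\<le>k. if i = k then F k p else 0)"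
      unfolding skew_mult_def
    proof (rule sum.cong[OF refl])
      fix i assume "i \<in> {..k}"
      then show "F i p * (?T ^^ i) (G (k - i)) p = (if i = k then F k p else 0)"
        using pow_T[OF pX assms(2)] by (auto simp: G_def r_def)
    qed
    also have "\<dots> = F k p" by simp
    finally have L: "skew_mult n \<sigma> F G k p = F k p" .
    have "skew_mult n \<sigma> G F k p = (\<Sum>i\<le>k. if i = 0 then 0 else 0)"
      unfolding skew_mult_def
      by (rule sum.cong[OF refl]) (use rp in \<open>auto simp: G_def\<close>)
    then have R: "skew_mult n \<sigma> G F k p = 0" by simp
    show "F k p = 0" using comm[OF GS] L R by metis
  next
    fix k
    define G :: "nat \<Rightarrow> nat \<Rightarrow> real" where "G = (\<lambda>j q. if j = 1 \<and> q \<in> Xset n then 1 else 0)"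
    have GS: "G \<in> SkewPS n" by (auto simp: G_def SkewPS_def Alg_def)
    show "?T (F k) = F k"
    proof
      fix p show "?T (F k) p = F k p"
      proof (cases "p \<in> Xset n")
        case False then show ?thesis using Fout by (simp add: sig_tilde_def)
      next
        case pX: True
        have "skew_mult n \<sigma> F G (Suc k) p = (\<Sum>i\<le>Suc k. if i = k then F k p else 0)"
          unfolding skew_mult_def
        proof (rule sum.cong[OF refl])
          fix i assume "i \<in> {..Suc k}"
          then show "F i p * (?T ^^ i) (G (Suc k - i)) p = (if i = k then F k p else 0)"
            using pow_T[OF pX assms(2)] inv_pow_stays[OF pX assms(2)]
            by (auto simp: G_def)
        qed
        also have "\<dots> = F k p" by simp
        finally have L: "skew_mult n \<sigma> F G (Suc k) p = F k p" .
        have "skew_mult n \<sigma> G F (Suc k) p = (\<Sum>i\<le>Suc k. if i = 1 then ?T (F k) p else 0)"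
          unfolding skew_mult_def
          by (rule sum.cong[OF refl]) (use pX in \<open>auto simp: G_def\<close>)
        also have "\<dots> = ?T (F k) p" by simp
        finally have R: "skew_mult n \<sigma> G F (Suc k) p = ?T (F k) p" .
        show ?thesis using comm[OF GS] L R by metis
      qed
    qed
  qed
  then show "F \<in> {F \<in> SkewPS n. \<forall>k. (\<forall>p \<in> Sep n \<sigma> k. F k p = 0) \<and> ?T (F k) = F k}"
    using FS by blast
next
  let ?T = "sig_tilde n \<sigma>"
  let ?s = "inv_into (Xset n) \<sigma>"
  fix F assume "F \<in> {F \<in> SkewPS n. \<forall>k. (\<forall>p \<in> Sep n \<sigma> k. F k p = 0) \<and> ?T (F k) = F k}"
  then have FS: "F \<in> SkewPS n" and sep: "\<And>k p. p \<in> Sep n \<sigma> k \<Longrightarrow> F k p = 0"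
    and fx: "\<And>k. ?T (F k) = F k" by auto
  have Fout: "\<And>k p. p \<notin> Xset n \<Longrightarrow> F k p = 0" using FS by (auto simp: SkewPS_def Alg_def)
  have "skew_mult n \<sigma> F G = skew_mult n \<sigma> G F" if GS: "G \<in> SkewPS n" for G
  proof (intro ext)
    fix m p
    have Gout: "\<And>k. p \<notin> Xset n \<Longrightarrow> G k p = 0" using GS by (auto simp: SkewPS_def Alg_def)
    show "skew_mult n \<sigma> F G m p = skew_mult n \<sigma> G F m p"
    proof (cases "p \<in> Xset n")
      case False then show ?thesis using Fout Gout by (simp add: skew_mult_def)
    next
      case pX: True
      have "skew_mult n \<sigma> F G m p = (\<Sum>i\<le>m. F i p * G (m - i) p)"
        unfolding skew_mult_def
      proof (rule sum.cong[OF refl])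
        fix i
        show "F i p * (?T ^^ i) (G (m - i)) p = F i p * G (m - i) p"
        proof (cases "F i p = 0")
          case False
          then have "p \<notin> Sep n \<sigma> i" using sep by blast
          then have e: "(\<sigma> ^^ i) p = p" using pX by (auto simp: Sep_def)
          have "(?s ^^ i) p = p"
          proof -
            have inj: "inj_on \<sigma> (Xset n)" using assms(2) by (auto simp: bij_betw_def)
            have "\<And>q. q \<in> Xset n \<Longrightarrow> (\<sigma> ^^ j) q \<in> Xset n" for j
              using assms(2) by (induction j) (auto simp: bij_betw_def)
            have "(?s ^^ j) ((\<sigma> ^^ j) q) = q" if "q \<in> Xset n" for j q
              using that
            proof (induction j arbitrary: q)
              case 0 then show ?case by simp
            next
              case (Suc j)
              have sq: "\<sigma> q \<in> Xset n" using Suc.prems assms(2) by (auto simp: bij_betw_def)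
              have "(?s ^^ Suc j) ((\<sigma> ^^ Suc j) q) = ?s ((?s ^^ j) ((\<sigma> ^^ j) (\<sigma> q)))"
                by (simp add: funpow_swap1)
              also have "\<dots> = ?s (\<sigma> q)" using Suc.IH[OF sq] by simp
              also have "\<dots> = q" using inj Suc.prems by (simp add: inv_into_f_f)
              finally show ?case .
            qed
            from this[OF pX, of i] e show ?thesis by simp
          qed
          then show ?thesis using pow_T[OF pX assms(2)] by simp
        qed simp
      qed
      also have "\<dots> = (\<Sum>i\<le>m. G (m - i) p * F (m - (m - i)) p)"
        by (rule sum.cong[OF refl]) (auto simp: mult.commute)
      also have "\<dots> = (\<Sum>i\<le>m. G i p * F (m - i) p)"
        using sum_rev_atMost[of "\<lambda>i. G i p * F (m - i) p" m] by simp
      also have "\<dots> = skew_mult n \<sigma> G F m p"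
        unfolding skew_mult_def
        using pow_T[OF pX assms(2)] fix_T[OF pX assms(2) fx] by simp
      finally show ?thesis .
    qed
  qed
  then show "F \<in> skew_center n \<sigma>" using FS by (auto simp: skew_center_def)
qed

end
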